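(* Let $r>0$, $V_T>0$ and $R_0\ge r$. Define $$f(t,V_s)=1+\frac{1}{2R_0(R_0+r)}\left(r^2-V_T^2\left(\frac{2\pi R_0}{V_s}+t\right)^2\right)-\cos\!\left(\frac{V_s t}{R_0}\right)$$ and $$V_c=\frac{\left(2\pi+\arcsin\frac{r}{R_0}\right)R_0V_T}{r}.$$ Then the minimum of $t\mapsto f(t,V_c)$ over $0\le t\le \frac{\pi R_0}{2V_c}$ is strictly positive, that is, $f(t^*,V_c)>0$ at the minimizer $t^*$. In particular $f(t,V_c)\ge 0$ for all $t\in\left[0,\frac{\pi R_0}{2V_c}\right]$.
   Context: $R_0$ is the initial radius of the disk containing the evaders, $2r$ is the length of the sweeper's line sensor, $V_T$ is the maximal evader speed, and $V_c$ is a candidate sweeper speed. The condition $f(t,V_s)\ge 0$ for $0\le t\le \pi R_0/(2V_s)$ is the paper's criterion for the sweeper to be fast enough to accomplish the confinement task. *)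

theory Defs
  imports "HOL-Analysis.Analysis"
begin

definition sweep_f :: "real \<Rightarrow> real \<Rightarrow> real \<Rightarrow> real \<Rightarrow> real \<Rightarrow> real" where
  "sweep_f R0 r VT t Vs =
     1 + (1 / (2 * R0 * (R0 + r))) * (r^2 - VT^2 * (2 * pi * R0 / Vs + t)^2)
       - cos (Vs * t / R0)"

definition sweep_Vc :: "real \<Rightarrow> real \<Rightarrow> real \<Rightarrow> real" where
  "sweep_Vc R0 r VT = (2 * pi + arcsin (r / R0)) * R0 * VT / r"

end

theory Submission
  imports Defs
begin

lemma key_pos:
  fixes r R0 s :: real
  assumes r: "r > 0" and R: "R0 \<ge> r" and s0: "0 \<le> s" and s1: "s \<le> pi/2"
  defines "a \<equiv> arcsin (r / R0)"
  shows "1 + (1 / (2 * R0 * (R0 + r))) * (r^2 - (r * (2*pi+s) / (2*pi+a))^2) - cos s > 0"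
proof -
  have R0: "R0 > 0" using r R by linarith
  have rho: "0 < r / R0" "r / R0 \<le> 1" using r R0 R by (auto simp: field_simps)
  have a0: "0 < a" unfolding a_def using rho arcsin_less_arcsin[of 0 "r/R0"] by simp
  have a1: "a \<le> pi/2" unfolding a_def using rho arcsin_bounded[of "r/R0"] by simp
  have sina: "sin a = r / R0" unfolding a_def using rho by simp
  define q where "q = ((2*pi+s)/(2*pi+a))^2"
  have pa: "2*pi+a > 0" using a0 pi_gt_zero by linarith
  have eq: "(r * (2*pi+s) / (2*pi+a))^2 = r^2 * q" unfolding q_def by (simp add: power_divide power_mult_distrib)
  have D: "2 * R0 * (R0 + r) > 0" using R0 r by simp
  have G: "1 + (1 / (2 * R0 * (R0 + r))) * (r^2 - (r * (2*pi+s) / (2*pi+a))^2) - cos s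
      = (1 - cos s) + (r^2 - r^2*q) / (2 * R0 * (R0 + r))" using eq by simp
  show ?thesis unfolding G
  proof (cases "s \<le> a")
    case True
    have "q \<le> 1" unfolding q_def using True pa s0 by (simp add: power_le_one divide_le_eq_1)
    hence t1: "r^2 - r^2*q \<ge> 0" by (simp add: mult_left_le)
    show "(1 - cos s) + (r^2 - r^2*q) / (2 * R0 * (R0 + r)) > 0"
    proof (cases "s = 0")
      case True
      have x1: "2*pi/(2*pi+a) < 1" using pa a0 by (simp add: divide_less_eq)
      have x0: "0 \<le> 2*pi/(2*pi+a)" using pa pi_gt_zero by simp
      have "(2*pi/(2*pi+a))^2 < 1" using x0 x1 by (simp add: power_less_one_iff)
      hence "q < 1" unfolding q_def using True by simp
      hence "r^2 - r^2*q > 0" using r by simp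
      thus ?thesis using True D by simp
    next
      case False
      have "cos s < 1" using False s0 s1 cos_monotone_0_pi[of 0 s] by simp
      moreover have "(r^2 - r^2*q) / (2 * R0 * (R0 + r)) \<ge> 0" using t1 D by simp
      ultimately show ?thesis by linarith
    qed
  next
    case False
    have cs: "cos s < 1" using False a0 s1 cos_monotone_0_pi[of 0 s] by simp
    have ss: "sin a \<le> sin s" using False a0 s1 sin_monotone_2pi_le[of a s] by simp
    have sa0: "sin a > 0" using sina rho by simp
    have ss2: "(sin a)^2 \<le> (sin s)^2" using ss sa0 by (simp add: power_mono)
    have q1: "q \<ge> 1" unfolding q_def using False pa by (simp add: one_le_power)
    have "(2*pi+s)^2 - (2*pi+a)^2 = (s-a)*(4*pi+s+a)" by (simp add: power2_eq_square algebra_simps)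
    also have "\<dots> \<le> (pi/2) * (5*pi)" 
      using False a0 s1 pi_gt_zero by (intro mult_mono) auto
    finally have h: "(2*pi+s)^2 - (2*pi+a)^2 \<le> 5/8 * (2*pi)^2" by (simp add: power2_eq_square)
    have "(2*pi)^2 \<le> (2*pi+a)^2" using a0 pi_gt_zero by (intro power_mono) auto
    hence "(2*pi+s)^2 \<le> 13/8 * (2*pi+a)^2" using h by linarith
    hence q58: "q - 1 \<le> 5/8" unfolding q_def using pa by (simp add: power_divide field_simps)
    have "r^2*q - r^2 = r^2 * (q-1)" by (simp add: algebra_simps)
    have "(r^2*q - r^2) / (2 * R0 * (R0 + r)) \<le> (r^2*q - r^2) / (2 * R0 * R0)"
      using q1 R0 r by (intro divide_left_mono) (auto simp: mult_left_mono  mult_pos_pos)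
    also have "\<dots> = (sin a)^2 * (q - 1) / 2" proof -
      have rr: "r = R0 * sin a" using sina R0 by (simp add: field_simps)
      show ?thesis unfolding rr using R0 by (simp add: field_simps power2_eq_square)
    qed
    also have "\<dots> \<le> (sin s)^2 * (5/8) / 2" using ss2 q58 q1
      by (intro divide_right_mono mult_mono) auto
    also have "\<dots> = 5/16 * (1 - cos s) * (1 + cos s)" proof -
      have sq: "(sin s)^2 = 1 - (cos s)^2" by (simp add: sin_squared_eq)
      show ?thesis unfolding sq by (simp add: algebra_simps power2_eq_square)
    qed
    also have "\<dots> \<le> 5/16 * (1 - cos s) * 2" using cs cos_le_one[of s] by (intro mult_left_mono) auto
    finally have "(r^2*q - r^2) / (2 * R0 * (R0 + r)) \<le> 5/8 * (1 - cos s)" by linarith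
    moreover have "(r^2 - r^2*q) / (2 * R0 * (R0 + r)) = - ((r^2*q - r^2) / (2 * R0 * (R0 + r)))"
      by (metis minus_diff_eq minus_divide_left)
    ultimately show "(1 - cos s) + (r^2 - r^2*q) / (2 * R0 * (R0 + r)) > 0"  using cs by argo
  qed
qed

theorem theorem5:
  fixes r VT R0 :: real
  assumes "r > 0" and "VT > 0" and "R0 \<ge> r"
  shows "(\<exists>tstar \<in> {0 .. pi * R0 / (2 * sweep_Vc R0 r VT)}.
            (\<forall>t \<in> {0 .. pi * R0 / (2 * sweep_Vc R0 r VT)}.
               sweep_f R0 r VT tstar (sweep_Vc R0 r VT) \<le> sweep_f R0 r VT t (sweep_Vc R0 r VT))
            \<and> sweep_f R0 r VT tstar (sweep_Vc R0 r VT) > 0)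
       \<and> (\<forall>t \<in> {0 .. pi * R0 / (2 * sweep_Vc R0 r VT)}. sweep_f R0 r VT t (sweep_Vc R0 r VT) \<ge> 0)"
proof -
  define V where "V = sweep_Vc R0 r VT"
  define a where "a = arcsin (r / R0)"
  define T where "T = pi * R0 / (2 * V)"
  have R0: "R0 > 0" using assms by linarith
  have rho: "0 < r / R0" "r / R0 \<le> 1" using assms R0 by (auto simp: field_simps)
  have a0: "0 < a" unfolding a_def using rho arcsin_less_arcsin[of 0 "r/R0"] by simp
  have pa: "2*pi+a > 0" using a0 pi_gt_zero by linarith
  have V: "V = (2*pi+a) * R0 * VT / r" unfolding V_def a_def sweep_Vc_def by simp
  have Vp: "V > 0" unfolding V using pa R0 assms by simp
  have pos: "sweep_f R0 r VT t V > 0" if t: "t \<in> {0..T}" for t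
  proof -
    define s where "s = V * t / R0"
    have s0: "0 \<le> s" using t Vp R0 unfolding s_def T_def by simp
    have s1: "s \<le> pi/2" using t Vp R0 unfolding s_def T_def by (simp add: field_simps)
    have e: "VT * (2 * pi * R0 / V + t) = r * (2*pi+s) / (2*pi+a)"
      proof -
      have e1: "VT * (2 * pi * R0 / V + t) = (VT * R0 / V) * (2*pi+s)"
        unfolding s_def using Vp R0 by (simp add: field_simps)
      have e2: "VT * R0 / V = r / (2*pi+a)" proof -
        have n1: "(2*pi+a) * R0 * VT \<noteq> 0" using pa R0 assms by simp
        have "VT * R0 / V = VT * R0 * r / ((2*pi+a) * R0 * VT)" unfolding V by simp
        also have "\<dots> = r / (2*pi+a)" using R0 assms by simp
        finally show ?thesis .
      qed
      show ?thesis unfolding e1 e2 by simp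
    qed
    have "sweep_f R0 r VT t V = 1 + (1 / (2 * R0 * (R0 + r))) * (r^2 - (r * (2*pi+s) / (2*pi+a))^2) - cos s"
      unfolding sweep_f_def s_def[symmetric] e[symmetric] by (simp add: power_mult_distrib)
    also have "\<dots> > 0" unfolding a_def using key_pos[OF assms(1) assms(3) s0 s1] by simp
    finally show ?thesis .
  qed
  have cont: "continuous_on {0..T} (\<lambda>t. sweep_f R0 r VT t V)"
    unfolding sweep_f_def using R0 by (intro continuous_intros) auto
  have ne: "{0..T} \<noteq> {}" using Vp R0 unfolding T_def by simp
  obtain ts where ts: "ts \<in> {0..T}" "\<forall>t\<in>{0..T}. sweep_f R0 r VT ts V \<le> sweep_f R0 r VT t V"
    using continuous_attains_inf[OF compact_Icc ne cont] by blast
  show ?thesis unfolding V_def[symmetric] T_def[symmetric]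
  proof (intro conjI ballI bexI[of _ ts])
    show "ts \<in> {0..T}" by (rule ts(1))
    show "sweep_f R0 r VT ts V \<le> sweep_f R0 r VT t V" if "t \<in> {0..T}" for t using ts(2) that by blast
    show "sweep_f R0 r VT ts V > 0" using pos ts(1) by blast
    show "sweep_f R0 r VT t V \<ge> 0" if "t \<in> {0..T}" for t using pos[OF that] by simp
  qed
qed

end
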